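(* Let $\alpha_1,\alpha_2$ be distinct closed cells of $\widetilde{V}_1$ whose intersection $\alpha=\alpha_1\cap\alpha_2$ is a common face. Then $N^\circ_{\alpha_1}\cap N^\circ_{\alpha_2}=N^\circ_{\alpha}$.
   Context: Let $\widetilde{W}$ be the well-rounded retract for $\mathrm{SL}_4$: the set of positive definite real symmetric $4\times4$ matrices $A$ with $\min\{xAx^t: x\in\mathbb{Z}^4\setminus\{0\}\}=1$ whose minimal vectors span $\mathbb{R}^4$; it is a locally finite regular cell complex with convex closed cells, and with respect to a fixed triangulation its first barycentric subdivision is a simplicial complex. Let $\sigma$ be the $6$-cell whose minimal vectors are $\pm e_1,\dots,\pm e_4$, let $\mathrm{Sp}_4(\mathbb{Z})$ be the integer matrices $g$ with $g\Omega g^t=\Omega$ for $\Omega$ with rows $(0,0,0,1),(0,0,1,0),(0,-1,0,0),(-1,0,0,0)$, acting by $A\mapsto \gamma A\gamma^t$, and let $\widetilde{V}_1=\bigcup_{\gamma\in\mathrm{Sp}_4(\mathbb{Z})}\gamma\cdot\sigma$, viewed as a simplicial subcomplex of the first barycentric subdivision of $\widetilde{W}$. For a simplicial complex $K$ and a vertex $v$, $\overline{\mathrm{star}}(v;K)$ is the closure of the set of simplices having $v$ as a face; for a full subcomplex $K_0$ (no simplex of $K\setminus K_0$ has all vertices in $K_0$), $N(K_0;K)=\bigcup_{v\text{ vertex of }K_0}\overline{\mathrm{star}}(v;K)$. Writing $K^{(2)}$ for the second barycentric subdivision, for each closed cell $\alpha$ of $\widetilde{V}_1$ let $N_\alpha=|N(\alpha^{(2)};\widetilde{V}_1^{(2)})|$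 (the second derived neighborhood of $\alpha$) and $N^\circ_\alpha$ its interior. *)

theory Defs
  imports "HOL-Analysis.Analysis"
begin

type_synonym mat4 = "real^4^4"
type_synonym vec4 = "real^4"

definition int_vec :: "vec4 \<Rightarrow> bool" where
  "int_vec x \<longleftrightarrow> (\<forall>i. x $ i \<in> \<int>)"

definition qf :: "mat4 \<Rightarrow> vec4 \<Rightarrow> real" where
  "qf A x = x \<bullet> (A *v x)"

definition pos_def_sym :: "mat4 \<Rightarrow> bool" where
  "pos_def_sym A \<longleftrightarrow> transpose A = A \<and> (\<forall>x. x \<noteq> 0 \<longrightarrow> qf A x > 0)"

definition arith_min :: "mat4 \<Rightarrow> real" where
  "arith_min A = Inf {qf A x | x. int_vec x \<and> x \<noteq> 0}"

definition min_vecs :: "mat4 \<Rightarrow> vec4 set" where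
  "min_vecs A = {x. int_vec x \<and> x \<noteq> 0 \<and> qf A x = arith_min A}"

definition WR :: "mat4 set" where
  "WR = {A. pos_def_sym A \<and> arith_min A = 1 \<and> span (min_vecs A) = UNIV}"

definition wr_cell :: "vec4 set \<Rightarrow> mat4 set" where
  "wr_cell M = closure {A \<in> WR. min_vecs A = M}"

definition WR_cells :: "mat4 set set" where
  "WR_cells = {wr_cell (min_vecs A) | A. A \<in> WR}"

definition sigma6 :: "mat4 set" where
  "sigma6 = wr_cell {x. \<exists>i. x = axis i 1 \<or> x = - axis i 1}"

definition Omega :: mat4 where
  "Omega = vector [vector [0,0,0,1], vector [0,0,1,0],
                   vector [0,-1,0,0], vector [-1,0,0,0]]"

definition Sp4Z :: "mat4 set" where
  "Sp4Z = {g. (\<forall>i j. g $ i $ j \<in> \<int>) \<and> g ** Omega ** transpose g = Omega}"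

definition act :: "mat4 \<Rightarrow> mat4 \<Rightarrow> mat4" where
  "act g A = g ** A ** transpose g"

definition V1 :: "mat4 set" where
  "V1 = (\<Union>g\<in>Sp4Z. act g ` sigma6)"

text \<open>closed cells of V_1: the cells of W that are faces of some translate g.sigma\<close>
definition V1_cells :: "mat4 set set" where
  "V1_cells = {c \<in> WR_cells. \<exists>g\<in>Sp4Z. c \<subseteq> act g ` sigma6}"

definition is_chain :: "'a set set \<Rightarrow> 'a set set \<Rightarrow> bool" where
  "is_chain F ch \<longleftrightarrow> finite ch \<and> ch \<noteq> {} \<and> ch \<subseteq> F \<and>
     (\<forall>X\<in>ch. \<forall>Y\<in>ch. X \<subseteq> Y \<or> Y \<subseteq> X)"

text \<open>simplices of the barycentric subdivision of a complex with closed convex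
  cells F, using the chosen barycentre b c (a point of the relative interior of c)\<close>
definition bary_sd :: "(mat4 set \<Rightarrow> mat4) \<Rightarrow> mat4 set set \<Rightarrow> mat4 set set" where
  "bary_sd b F = {convex hull (b ` ch) | ch. is_chain F ch}"

definition valid_bary :: "(mat4 set \<Rightarrow> mat4) \<Rightarrow> mat4 set set \<Rightarrow> bool" where
  "valid_bary b F \<longleftrightarrow> (\<forall>c\<in>F. b c \<in> rel_interior c)"

definition cstar :: "mat4 \<Rightarrow> mat4 set set \<Rightarrow> mat4 set" where
  "cstar v K = \<Union>{S \<in> K. v extreme_point_of S}"

definition sub_vertices :: "mat4 set \<Rightarrow> mat4 set set \<Rightarrow> mat4 set" where
  "sub_vertices X K = {v. \<exists>S\<in>K. S \<subseteq> X \<and> v extreme_point_of S}"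

text \<open>|N(K_0;K)| for K_0 the subcomplex of simplices of K contained in X\<close>
definition sd_nbhd :: "mat4 set \<Rightarrow> mat4 set set \<Rightarrow> mat4 set" where
  "sd_nbhd X K = (\<Union>v\<in>sub_vertices X K. cstar v K)"

text \<open>N_alpha (second derived neighbourhood in V_1) and its interior in |V_1|\<close>
definition N_alpha :: "(mat4 set \<Rightarrow> mat4) \<Rightarrow> (mat4 set \<Rightarrow> mat4) \<Rightarrow> mat4 set \<Rightarrow> mat4 set" where
  "N_alpha b1 b2 \<alpha> = sd_nbhd \<alpha> (bary_sd b2 (bary_sd b1 V1_cells))"

definition N_alpha_int :: "(mat4 set \<Rightarrow> mat4) \<Rightarrow> (mat4 set \<Rightarrow> mat4) \<Rightarrow> mat4 set \<Rightarrow> mat4 set" where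
  "N_alpha_int b1 b2 \<alpha> = (top_of_set V1) interior_of (N_alpha b1 b2 \<alpha>)"

end

theory Submission
  imports Defs
begin

definition outer :: "vec4 \<Rightarrow> mat4" where "outer x = (\<chi> i j. x$i * x$j)"

lemma qf_inner: "qf A x = inner (outer x) A"
  by (simp add: qf_def outer_def inner_vec_def matrix_vector_mult_def sum_distrib_left mult_ac)

lemma qf_lin: "qf (u *\<^sub>R A + v *\<^sub>R B) x = u * qf A x + v * qf B x"
  by (simp add: qf_inner inner_add_right)

lemma qf_zero[simp]: "qf A 0 = 0"
  by (simp add: qf_def)

lemma transpose_add': "transpose (A + B) = transpose A + transpose (B::mat4)"
  by (simp add: transpose_def vec_eq_iff)

definition Zc :: "vec4 set \<Rightarrow> mat4 set" where
  "Zc M = {A. transpose A = A \<and> (\<forall>x. 0 \<le> qf A x) \<and> (\<forall>x. int_vec x \<and> x \<noteq> 0 \<longrightarrow> 1 \<le> qf A x)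
      \<and> (\<forall>x\<in>M. qf A x = 1)}"

lemma WR_facts:
  assumes "A \<in> WR"
  shows "transpose A = A" "\<And>x. x \<noteq> 0 \<Longrightarrow> qf A x > 0"
    "\<And>x. int_vec x \<Longrightarrow> x \<noteq> 0 \<Longrightarrow> 1 \<le> qf A x"
    "min_vecs A = {x. int_vec x \<and> x \<noteq> 0 \<and> qf A x = 1}" "min_vecs A \<noteq> {}"
    "span (min_vecs A) = UNIV"
proof -
  show "transpose A = A" "\<And>x. x \<noteq> 0 \<Longrightarrow> qf A x > 0"
    using assms by (auto simp: WR_def pos_def_sym_def)
  have am: "arith_min A = 1" using assms by (simp add: WR_def)
  show ge: "\<And>x. int_vec x \<Longrightarrow> x \<noteq> 0 \<Longrightarrow> 1 \<le> qf A x"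
  proof -
    fix x :: vec4 assume "int_vec x" "x \<noteq> 0"
    have bdd: "bdd_below {qf A x | x. int_vec x \<and> x \<noteq> 0}"
      by (rule bdd_belowI[where m=0]) (use \<open>\<And>x. x \<noteq> 0 \<Longrightarrow> qf A x > 0\<close> in force)
    have "Inf {qf A x | x. int_vec x \<and> x \<noteq> 0} \<le> qf A x"
      by (rule cInf_lower) (use \<open>int_vec x\<close> \<open>x \<noteq> 0\<close> bdd in auto)
    then show "1 \<le> qf A x" using am by (simp add: arith_min_def)
  qed
  show "min_vecs A = {x. int_vec x \<and> x \<noteq> 0 \<and> qf A x = 1}"
    using am by (simp add: min_vecs_def)
  show sp: "span (min_vecs A) = UNIV" using assms by (simp add: WR_def)
  show "min_vecs A \<noteq> {}"
  proof
    assume "min_vecs A = {}"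
    then have "(UNIV::vec4 set) = {0}" using sp by simp
    moreover have "axis 1 1 \<noteq> (0::vec4)" by (simp add: axis_eq_0_iff)
    ultimately show False by blast
  qed
qed

lemma O_sub_Z: "{A\<in>WR. min_vecs A = M} \<subseteq> Zc M"
proof
  fix A assume A: "A \<in> {A\<in>WR. min_vecs A = M}"
  then have W: "A \<in> WR" and M: "M = min_vecs A" by auto
  have "0 \<le> qf A x" for x
    by (cases "x = 0") (use WR_facts(2)[OF W, of x] in auto)
  then show "A \<in> Zc M"
    using WR_facts[OF W] M unfolding Zc_def by auto
qed

lemma Zc_closed: "closed (Zc M)"
proof -
  have eq: "Zc M = (\<Inter>i. \<Inter>j. {A. inner (axis i (axis j 1) - axis j (axis i 1)) A = 0})
     \<inter> (\<Inter>x. {A. inner (outer x) A \<ge> 0}) \<inter> (\<Inter>x\<in>{x. int_vec x \<and> x \<noteq> 0}. {A. inner (outer x) A \<ge> 1})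
     \<inter> (\<Inter>x\<in>M. {A. inner (outer x) A = 1})"
    by (auto simp: Zc_def qf_inner[symmetric] inner_diff_left inner_axis' transpose_def vec_eq_iff)
  show ?thesis unfolding eq
    by (intro closed_Int closed_INT ballI allI closed_hyperplane closed_halfspace_ge)
qed

lemma Zc_convex: "convex (Zc M)"
  unfolding convex_def
proof (intro ballI allI impI)
  fix A B and u v :: real
  assume A: "A \<in> Zc M" and B: "B \<in> Zc M" and uv: "0 \<le> u" "0 \<le> v" "u + v = 1"
  have t: "transpose (u *\<^sub>R A + v *\<^sub>R B) = u *\<^sub>R A + v *\<^sub>R B"
    using A B by (simp add: Zc_def transpose_add' transpose_scalar)
  have p: "0 \<le> u * qf A x + v * qf B x" for x
    using A B uv by (simp add: Zc_def)
  have g: "1 \<le> u * qf A x + v * qf B x" if "int_vec x" "x \<noteq> 0" for x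
  proof -
    have "1 \<le> qf A x" "1 \<le> qf B x" using A B that by (auto simp: Zc_def)
    then have "u * 1 \<le> u * qf A x" "v * 1 \<le> v * qf B x"
      using uv mult_left_mono by blast+
    then show ?thesis using uv by linarith
  qed
  have e: "u * qf A x + v * qf B x = 1" if "x \<in> M" for x
    using A B uv that by (simp add: Zc_def)
  show "u *\<^sub>R A + v *\<^sub>R B \<in> Zc M"
    unfolding Zc_def using t p g e by (simp add: qf_lin)
qed

lemma Z_sub_closure:
  assumes A0: "A0 \<in> WR" and A: "A \<in> Zc (min_vecs A0)"
  shows "A \<in> closure {B\<in>WR. min_vecs B = min_vecs A0}"
proof -
  define M where "M = min_vecs A0"
  define At where "At t = (1-t) *\<^sub>R A0 + t *\<^sub>R A" for t
  have qfAt: "qf (At t) x = (1-t) * qf A0 x + t * qf A x" for t x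
    by (simp add: At_def qf_lin)
  have Mdef: "M = {x. int_vec x \<and> x \<noteq> 0 \<and> qf A0 x = 1}" using WR_facts(4)[OF A0] M_def by simp
  have AZ: "transpose A = A" "\<And>x. 0 \<le> qf A x" "\<And>x. int_vec x \<Longrightarrow> x \<noteq> 0 \<Longrightarrow> 1 \<le> qf A x"
     "\<And>x. x \<in> M \<Longrightarrow> qf A x = 1"
    using A by (auto simp: Zc_def M_def)
  have inO: "At t \<in> WR \<and> min_vecs (At t) = M" if t: "0 \<le> t" "t < 1" for t
  proof -
    have tr: "transpose (At t) = At t"
      using AZ(1) WR_facts(1)[OF A0] by (simp add: At_def transpose_add' transpose_scalar)
    have pd: "qf (At t) x > 0" if "x \<noteq> 0" for x
    proof -
      have "(1-t) * qf A0 x > 0" using WR_facts(2)[OF A0 that] t by simp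
      moreover have "t * qf A x \<ge> 0" using AZ(2)[of x] t by simp
      ultimately show ?thesis by (simp add: qfAt)
    qed
    have ge: "qf (At t) x \<ge> 1" if "int_vec x" "x \<noteq> 0" for x
    proof -
      have "(1-t) * 1 \<le> (1-t) * qf A0 x" using WR_facts(3)[OF A0 that] t by (intro mult_left_mono) auto
      moreover have "t * 1 \<le> t * qf A x" using AZ(3)[OF that] t by (intro mult_left_mono) auto
      ultimately show ?thesis by (simp add: qfAt)
    qed
    have eqv: "qf (At t) x = 1 \<longleftrightarrow> x \<in> M" if "int_vec x" "x \<noteq> 0" for x
    proof
      assume "x \<in> M" then show "qf (At t) x = 1" using AZ(4) Mdef by (simp add: qfAt)
    next
      assume q: "qf (At t) x = 1"
      show "x \<in> M"
      proof (rule ccontr)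
        assume "x \<notin> M"
        then have "qf A0 x > 1" using WR_facts(3)[OF A0 that] that Mdef by force
        then have "(1-t) * 1 < (1-t) * qf A0 x" using t by (intro mult_strict_left_mono) auto
        moreover have "t * 1 \<le> t * qf A x" using AZ(3)[OF that] t by (intro mult_left_mono) auto
        ultimately show False using q by (simp add: qfAt)
      qed
    qed
    obtain x0 where x0: "x0 \<in> M" using WR_facts(5)[OF A0] M_def by auto
    have am: "arith_min (At t) = 1"
      unfolding arith_min_def
    proof (rule cInf_eq_minimum)
      show "1 \<in> {qf (At t) x |x. int_vec x \<and> x \<noteq> 0}"
        using x0 Mdef eqv by force
      show "\<And>y. y \<in> {qf (At t) x |x. int_vec x \<and> x \<noteq> 0} \<Longrightarrow> 1 \<le> y" using ge by auto
    qed
    have mv: "min_vecs (At t) = M"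
      unfolding min_vecs_def am using eqv Mdef by auto
    have "span M = UNIV" using WR_facts(6)[OF A0] M_def by simp
    then show ?thesis
      using tr pd am mv by (simp add: WR_def pos_def_sym_def)
  qed
  show ?thesis
    unfolding closure_approachable
  proof (intro allI impI)
    fix e :: real assume e: "e > 0"
    define n where "n = norm (A0 - A)"
    define d where "d = min 1 (e / (n + 1))"
    have n0: "n \<ge> 0" by (simp add: n_def)
    have d0: "d > 0" using e n0 by (simp add: d_def)
    have d1: "d \<le> 1" by (simp add: d_def)
    have "At (1 - d) - A = d *\<^sub>R (A0 - A)"
      by (simp add: At_def algebra_simps)
    then have "dist (At (1-d)) A = d * n"
      using d0 by (simp add: dist_norm n_def)
    also have "\<dots> \<le> e / (n+1) * n" using n0 by (intro mult_right_mono) (auto simp: d_def)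
    also have "\<dots> < e" using e n0 by (simp add: field_simps)
    finally have "dist (At (1-d)) A < e" .
    moreover have "At (1-d) \<in> {B\<in>WR. min_vecs B = min_vecs A0}"
      using inO[of "1-d"] d0 d1 M_def by auto
    ultimately show "\<exists>y\<in>{B\<in>WR. min_vecs B = min_vecs A0}. dist y A < e" by blast
  qed
qed

lemma wr_cell_Zc:
  assumes "A0 \<in> WR" shows "wr_cell (min_vecs A0) = Zc (min_vecs A0)"
proof
  show "wr_cell (min_vecs A0) \<subseteq> Zc (min_vecs A0)"
    unfolding wr_cell_def by (rule closure_minimal[OF O_sub_Z Zc_closed])
  show "Zc (min_vecs A0) \<subseteq> wr_cell (min_vecs A0)"
    unfolding wr_cell_def using Z_sub_closure[OF assms] by blast
qed

lemma cell_convex: "c \<in> WR_cells \<Longrightarrow> convex c"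
  unfolding WR_cells_def using wr_cell_Zc Zc_convex by auto

lemma cell_face:
  assumes c: "c \<in> WR_cells" and d: "d \<in> WR_cells"
  shows "c \<inter> d face_of c"
proof -
  obtain A0 where A0: "A0 \<in> WR" "c = Zc (min_vecs A0)"
    using c wr_cell_Zc unfolding WR_cells_def by auto
  obtain A1 where A1: "A1 \<in> WR" "d = Zc (min_vecs A1)"
    using d wr_cell_Zc unfolding WR_cells_def by auto
  define M where "M = min_vecs A0"
  define M' where "M' = min_vecs A1"
  have M'ne: "M' \<noteq> {}" using WR_facts(5)[OF A1(1)] M'_def by simp
  have M'int: "\<And>x. x \<in> M' \<Longrightarrow> int_vec x \<and> x \<noteq> 0" using WR_facts(4)[OF A1(1)] M'_def by auto
  have eq: "c \<inter> d = \<Inter>((\<lambda>x. c \<inter> {A. inner (outer x) A = 1}) ` M')"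
  proof
    show "c \<inter> d \<subseteq> \<Inter>((\<lambda>x. c \<inter> {A. inner (outer x) A = 1}) ` M')"
      using A1 M'_def by (auto simp: Zc_def qf_inner)
    show "\<Inter>((\<lambda>x. c \<inter> {A. inner (outer x) A = 1}) ` M') \<subseteq> c \<inter> d"
      using A0 A1 M'_def M'ne by (auto simp: Zc_def qf_inner)
  qed
  have cc: "convex c" using A0 Zc_convex by simp
  show ?thesis unfolding eq
  proof (rule face_of_Inter)
    show "(\<lambda>x. c \<inter> {A. inner (outer x) A = 1}) ` M' \<noteq> {}" using M'ne by simp
    fix T assume "T \<in> (\<lambda>x. c \<inter> {A. inner (outer x) A = 1}) ` M'"
    then obtain x where x: "x \<in> M'" "T = c \<inter> {A. inner (outer x) A = 1}" by auto
    show "T face_of c" unfolding x(2)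
      by (rule face_of_Int_supporting_hyperplane_ge[OF cc])
         (use A0 M'int[OF x(1)] in \<open>auto simp: Zc_def qf_inner\<close>)
  qed
qed

definition good :: "mat4 set set \<Rightarrow> bool" where
  "good F \<longleftrightarrow> (\<forall>c\<in>F. convex c) \<and> (\<forall>c\<in>F. \<forall>d\<in>F. c \<inter> d face_of c)"

lemma good_WR: "good WR_cells"
  by (simp add: good_def cell_convex cell_face)

lemma good_mono: "good F \<Longrightarrow> G \<subseteq> F \<Longrightarrow> good G"
  by (auto simp: good_def)

lemma chain_max:
  assumes "finite C" "C \<noteq> {}" "\<forall>X\<in>C. \<forall>Y\<in>C. X \<subseteq> Y \<or> Y \<subseteq> X"
  shows "\<exists>c\<in>C. \<forall>d\<in>C. d \<subseteq> (c::'a set)"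
  using assms
proof (induction C rule: finite_ne_induct)
  case (singleton x) then show ?case by auto
next
  case (insert x F)
  then obtain c where c: "c \<in> F" "\<forall>d\<in>F. d \<subseteq> c" by auto
  then have "x \<subseteq> c \<or> c \<subseteq> x" using insert.prems by auto
  then show ?case using c by auto
qed

lemma chain_min:
  assumes "finite C" "C \<noteq> {}" "\<forall>X\<in>C. \<forall>Y\<in>C. X \<subseteq> Y \<or> Y \<subseteq> X"
  shows "\<exists>c\<in>C. \<forall>d\<in>C. c \<subseteq> (d::'a set)"
  using assms
proof (induction C rule: finite_ne_induct)
  case (singleton x) then show ?case by auto
next
  case (insert x F)
  then obtain c where c: "c \<in> F" "\<forall>d\<in>F. c \<subseteq> d" by auto
  then have "x \<subseteq> c \<or> c \<subseteq> x" using insert.prems by auto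
  then show ?case using c by auto
qed

lemma is_chain_max:
  assumes "is_chain F C" obtains c where "c \<in> C" "\<And>d. d \<in> C \<Longrightarrow> d \<subseteq> c"
proof -
  have "finite C" "C \<noteq> {}" "\<forall>X\<in>C. \<forall>Y\<in>C. X \<subseteq> Y \<or> Y \<subseteq> X"
    using assms unfolding is_chain_def by auto
  from chain_max[OF this] show ?thesis using that by blast
qed

lemma is_chain_subset:
  "is_chain F C \<Longrightarrow> D \<subseteq> C \<Longrightarrow> D \<noteq> {} \<Longrightarrow> is_chain F D"
  unfolding is_chain_def by (meson finite_subset subset_trans subsetD)

lemma L1:
  fixes F :: "mat4 set set"
  assumes conv: "\<forall>c\<in>F. convex c" and val: "\<forall>c\<in>F. b c \<in> rel_interior c"
  shows "is_chain F C \<Longrightarrow> p \<in> convex hull (b ` C) \<Longrightarrow>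
     \<exists>c\<in>C. p \<in> rel_interior c \<and> p \<in> convex hull (b ` {d\<in>C. d \<subseteq> c})"
proof (induction "card C" arbitrary: C p rule: less_induct)
  case less
  obtain c where c: "c \<in> C" "\<And>d. d \<in> C \<Longrightarrow> d \<subseteq> c" using is_chain_max[OF less.prems(1)] by blast
  have CF: "C \<subseteq> F" and fin: "finite C" using less.prems(1) by (auto simp: is_chain_def)
  have bc: "b c \<in> rel_interior c" using val c CF by auto
  have cc: "convex c" using conv c CF by auto
  have all: "{d\<in>C. d \<subseteq> c} = C" using c by auto
  show ?case
  proof (cases "C - {c} = {}")
    case True
    then have "C = {c}" using c by auto
    then show ?thesis using less.prems(2) bc all by auto
  next
    case False
    define C' where "C' = C - {c}"
    have ch': "is_chain F C'" using is_chain_subset[OF less.prems(1)] False C'_def by auto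
    have card': "card C' < card C" using fin c unfolding C'_def by (meson card_Diff1_less)
    have bC: "b ` C = insert (b c) (b ` C')" using c C'_def by auto
    have ne: "b ` C' \<noteq> {}" using False C'_def by auto
    obtain u v q where uvq: "u \<ge> 0" "v \<ge> 0" "u + v = 1" "q \<in> convex hull (b ` C')"
      "p = u *\<^sub>R b c + v *\<^sub>R q"
      using less.prems(2) unfolding bC convex_hull_insert[OF ne] by blast
    have "b ` C' \<subseteq> c"
    proof
      fix y assume "y \<in> b ` C'"
      then obtain d where d: "d \<in> C'" "y = b d" by auto
      then have "b d \<in> d" using val CF C'_def rel_interior_subset by auto
      then show "y \<in> c" using d c C'_def by auto
    qed
    then have qc: "q \<in> c" using uvq(4) hull_minimal[of _ c convex] cc by blast
    show ?thesis
    proof (cases "u = 0")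
      case True
      then have "p = q" using uvq by simp
      then obtain c' where c': "c' \<in> C'" "p \<in> rel_interior c'" "p \<in> convex hull (b ` {d\<in>C'. d \<subseteq> c'})"
        using less.hyps[OF card' ch'] uvq(4) by blast
      have "convex hull (b ` {d\<in>C'. d \<subseteq> c'}) \<subseteq> convex hull (b ` {d\<in>C. d \<subseteq> c'})"
        by (intro hull_mono image_mono) (auto simp: C'_def)
      then show ?thesis using c' C'_def by auto
    next
      case False
      have "q - u *\<^sub>R (q - b c) \<in> rel_interior c"
        by (rule rel_interior_closure_convex_shrink[OF cc bc]) (use qc closure_subset False uvq in auto)
      moreover have "q - u *\<^sub>R (q - b c) = p"
      proof -
        have v: "v = 1 - u" using uvq by simp
        show ?thesis using uvq(5) unfolding v by (simp add: algebra_simps)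
      qed
      ultimately show ?thesis using less.prems(2) all c by auto
    qed
  qed
qed

lemma subset_cell:
  assumes "good F" "c \<in> F" "d \<in> F" "U \<subseteq> c" "x \<in> rel_interior U" "x \<in> d"
  shows "U \<subseteq> d"
proof -
  have f: "c \<inter> d face_of c" using assms(1,2,3) by (auto simp: good_def)
  have xc: "x \<in> c" using assms(4,5) rel_interior_subset by blast
  have "(c \<inter> d) \<inter> rel_interior U \<noteq> {}" using xc assms(5,6) by blast
  then have "U \<subseteq> c \<inter> d" by (rule subset_of_face_of[OF f assms(4)])
  then show ?thesis by blast
qed

lemma uniq_cell:
  assumes "good F" "c \<in> F" "d \<in> F" "x \<in> rel_interior c" "x \<in> rel_interior d"
  shows "c = d"
proof -
  have xc: "x \<in> c" and xd: "x \<in> d" using assms(4,5) rel_interior_subset by blast+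
  have "c \<subseteq> d" by (rule subset_cell[OF assms(1,2,3) order_refl assms(4) xd])
  moreover have "d \<subseteq> c" by (rule subset_cell[OF assms(1,3,2) order_refl assms(5) xc])
  ultimately show ?thesis by blast
qed

lemma claimA:
  fixes F :: "mat4 set set"
  assumes g: "good F" and val: "\<forall>c\<in>F. b c \<in> rel_interior c"
    and E: "is_chain F E" and P: "is_chain F P"
    and sub: "convex hull (b ` E) \<subseteq> convex hull (b ` P)"
  shows "E \<subseteq> P"
proof
  fix e assume e: "e \<in> E"
  have eF: "e \<in> F" using E e by (auto simp: is_chain_def)
  have "b e \<in> convex hull (b ` P)" using sub e hull_subset[of "b ` E" convex] by blast
  then obtain c where c: "c \<in> P" "b e \<in> rel_interior c"
    using L1[of F b P "b e"] g val P by (auto simp: good_def)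
  have cF: "c \<in> F" using P c by (auto simp: is_chain_def)
  have "e = c" using uniq_cell[OF g eF cF _ c(2)] val eF by blast
  then show "e \<in> P" using c by simp
qed

lemma not_rel_int_below:
  fixes F :: "mat4 set set"
  assumes g: "good F" and "c \<in> F" "d \<in> F" "d \<subseteq> c" "d \<noteq> c" "z \<in> d"
  shows "z \<notin> rel_interior c"
proof
  assume "z \<in> rel_interior c"
  then have "c \<subseteq> d" using subset_cell[OF g assms(2,3) order_refl _ assms(6)] by blast
  then show False using assms(4,5) by blast
qed

lemma chain_hull_sub:
  fixes F :: "mat4 set set"
  assumes g: "good F" and val: "\<forall>c\<in>F. b c \<in> rel_interior c" and C: "is_chain F C"
    and c: "c \<in> F" "\<And>d. d \<in> C \<Longrightarrow> d \<subseteq> c"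
  shows "convex hull (b ` C) \<subseteq> c"
proof (rule hull_minimal)
  show "b ` C \<subseteq> c"
  proof
    fix y assume "y \<in> b ` C"
    then obtain d where d: "d \<in> C" "y = b d" by auto
    have "d \<in> F" using C d by (auto simp: is_chain_def)
    then have "b d \<in> d" using val rel_interior_subset by blast
    then show "y \<in> c" using d c by auto
  qed
  show "convex c" using g c by (auto simp: good_def)
qed

lemma AI:
  fixes F :: "mat4 set set"
  assumes g: "good F" and val: "\<forall>c\<in>F. b c \<in> rel_interior c"
  shows "is_chain F C \<Longrightarrow> \<not> affine_dependent (b ` C)"
proof (induction "card C" arbitrary: C rule: less_induct)
  case less
  obtain c where c: "c \<in> C" "\<And>d. d \<in> C \<Longrightarrow> d \<subseteq> c" using is_chain_max[OF less.prems(1)] by blast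
  have CF: "C \<subseteq> F" and fin: "finite C" using less.prems(1) by (auto simp: is_chain_def)
  have cF: "c \<in> F" using c CF by auto
  show ?case
  proof (cases "C - {c} = {}")
    case True
    then have "C = {c}" using c by auto
    then show ?thesis by simp
  next
    case False
    define C' where "C' = C - {c}"
    have ch': "is_chain F C'" using is_chain_subset[OF less.prems(1)] False C'_def by auto
    have card': "card C' < card C" using fin c unfolding C'_def by (meson card_Diff1_less)
    have IH: "\<not> affine_dependent (b ` C')" using less.hyps[OF card' ch'] .
    have bC: "b ` C = insert (b c) (b ` C')" using c C'_def by auto
    obtain c' where c': "c' \<in> C'" "\<And>d. d \<in> C' \<Longrightarrow> d \<subseteq> c'" using is_chain_max[OF ch'] by blast
    have c'F: "c' \<in> F" using c' CF C'_def by auto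
    have c'c: "c' \<subseteq> c" "c' \<noteq> c" using c' c C'_def by auto
    have "b c \<notin> affine hull (b ` C')"
    proof
      assume a: "b c \<in> affine hull (b ` C')"
      have "b ` C' \<subseteq> convex hull (b ` C')" by (rule hull_subset)
      then have "b ` C' \<subseteq> c'" using chain_hull_sub[OF g val ch' c'F c'(2)] by (rule order_trans)
      then have "affine hull (b ` C') \<subseteq> affine hull c'" by (rule hull_mono)
      then have "b c \<in> affine hull c'" using a by blast
      moreover have "b c \<in> rel_interior c" using val cF by blast
      ultimately have nd: "\<not> disjnt (affine hull c') (rel_interior c)" by (auto simp: disjnt_def)
      have "c \<inter> c' face_of c" using g cF c'F by (auto simp: good_def)
      then have f: "c' face_of c" using c'c by (simp add: Int_absorb1)
      have ccv: "convex c" using g cF by (simp add: good_def)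
      have "c \<subseteq> c'"
        by (rule subset_of_face_of_affine_hull[OF f ccv order_refl nd])
      then show False using c'c by blast
    qed
    then show ?thesis unfolding bC by (rule affine_independent_insert[OF IH])
  qed
qed

lemma G3c:
  fixes F :: "mat4 set set"
  assumes g: "good F" and val: "\<forall>c\<in>F. b c \<in> rel_interior c"
  shows "is_chain F C1 \<Longrightarrow> is_chain F C2 \<Longrightarrow> p \<in> rel_interior (convex hull (b ` C1))
     \<Longrightarrow> p \<in> convex hull (b ` C2) \<Longrightarrow> C1 \<subseteq> C2"
proof (induction "card C1" arbitrary: C1 p rule: less_induct)
  case less
  have conv: "\<forall>c\<in>F. convex c" using g by (simp add: good_def)
  obtain c where c: "c \<in> C1" "\<And>d. d \<in> C1 \<Longrightarrow> d \<subseteq> c" using is_chain_max[OF less.prems(1)] by blast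
  have CF: "C1 \<subseteq> F" and fin: "finite C1" using less.prems(1) by (auto simp: is_chain_def)
  have C2F: "C2 \<subseteq> F" using less.prems(2) by (auto simp: is_chain_def)
  have cF: "c \<in> F" using c CF by auto
  have cc: "convex c" using conv cF by blast
  define a where "a = b c"
  have a: "a \<in> rel_interior c" using val cF a_def by blast
  have key: "z \<notin> rel_interior c" if "d \<in> F" "d \<subseteq> c" "d \<noteq> c" "z \<in> d" for d z
    using not_rel_int_below[OF g cF that] .
  obtain c2 where c2: "c2 \<in> C2" "p \<in> rel_interior c2" "p \<in> convex hull (b ` {d\<in>C2. d \<subseteq> c2})"
    using L1[OF conv val less.prems(2,4)] by blast
  have c2F: "c2 \<in> F" using c2 C2F by auto
  show ?case
  proof (cases "C1 - {c} = {}")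
    case True
    then have "C1 = {c}" using c by auto
    then have "p = a" using less.prems(3) a_def by simp
    then have "c2 = c" using uniq_cell[OF g c2F cF c2(2)] a by simp
    then show ?thesis using \<open>C1 = {c}\<close> c2 by simp
  next
    case False
    define C' where "C' = C1 - {c}"
    have ch': "is_chain F C'" using is_chain_subset[OF less.prems(1)] False C'_def by auto
    have card': "card C1' < card C1" if "C1' = C'" for C1' using fin c unfolding that C'_def by (meson card_Diff1_less)
    define S where "S = b ` C1"
    define S' where "S' = b ` C'"
    have ai: "\<not> affine_dependent S" using AI[OF g val less.prems(1)] S_def by simp
    have finS: "finite S" using fin S_def by simp
    have aS': "a \<notin> S'"
    proof
      assume "a \<in> S'"
      then obtain d where d: "d \<in> C'" "b d = a" using S'_def by auto
      have "d \<in> F" using d CF C'_def by auto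
      then have "d = c" using uniq_cell[OF g _ cF, of d a] val d a by auto
      then show False using d C'_def by auto
    qed
    have Sins: "S = insert a S'" using S_def S'_def a_def c C'_def by auto
    have S'ne: "S' \<noteq> {}" using False S'_def C'_def by auto
    have finS': "finite S'" using finS Sins by simp
    have "p \<in> rel_interior (convex hull S)" using less.prems(3) S_def by simp
    then have "p \<in> {y. \<exists>u. (\<forall>x \<in> S. 0 < u x) \<and> sum u S = 1 \<and> sum (\<lambda>x. u x *\<^sub>R x) S = y}"
      unfolding rel_interior_convex_hull_explicit[OF ai] .
    then obtain u where u: "\<forall>x\<in>S. 0 < u x" "sum u S = 1" "(\<Sum>x\<in>S. u x *\<^sub>R x) = p"
      by blast
    define lam where "lam = u a"
    have sumS: "sum u S = lam + sum u S'" using Sins aS' finS' lam_def by simp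
    have pos': "sum u S' > 0" using S'ne finS' u(1) Sins by (intro sum_pos) auto
    have lam0: "0 < lam" using u(1) Sins lam_def by auto
    have lam1: "lam < 1" using sumS u(2) pos' by simp
    define q where "q = (\<Sum>x\<in>S'. (u x / (1 - lam)) *\<^sub>R x)"
    have ai': "\<not> affine_dependent S'" using ai Sins affine_dependent_subset by blast
    have qri: "q \<in> rel_interior (convex hull S')"
      unfolding rel_interior_convex_hull_explicit[OF ai']
    proof (intro CollectI exI conjI)
      show "\<forall>x\<in>S'. 0 < u x / (1 - lam)" using u(1) Sins lam1 by auto
      have "sum (\<lambda>x. u x / (1 - lam)) S' = sum u S' / (1 - lam)" by (simp add: sum_divide_distrib)
      also have "\<dots> = 1" using sumS u(2) lam1 by simp
      finally show "sum (\<lambda>x. u x / (1 - lam)) S' = 1" .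
      show "(\<Sum>x\<in>S'. (u x / (1 - lam)) *\<^sub>R x) = q" by (simp add: q_def)
    qed
    have pq: "p = lam *\<^sub>R a + (1 - lam) *\<^sub>R q"
    proof -
      have "(1 - lam) *\<^sub>R q = (\<Sum>x\<in>S'. u x *\<^sub>R x)"
        unfolding q_def scaleR_sum_right using lam1 by (intro sum.cong) auto
      moreover have "p = u a *\<^sub>R a + (\<Sum>x\<in>S'. u x *\<^sub>R x)"
        using u(3) Sins aS' finS' by simp
      ultimately show ?thesis by (simp add: lam_def)
    qed
    obtain c' where c': "c' \<in> C'" "\<And>d. d \<in> C' \<Longrightarrow> d \<subseteq> c'" using is_chain_max[OF ch'] by blast
    have c'F: "c' \<in> F" using c' CF C'_def by auto
    have c'c: "c' \<subseteq> c" "c' \<noteq> c" using c' c C'_def by auto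
    have hS': "convex hull S' \<subseteq> c'" using chain_hull_sub[OF g val ch' c'F c'(2)] S'_def by simp
    have "q \<in> convex hull S'" using rel_interior_subset qri by (rule subsetD)
    then have qc': "q \<in> c'" using hS' by blast
    have qc: "q \<in> c" using qc' c'c by blast
    have qnr: "q \<notin> rel_interior c" using key[OF c'F c'c qc'] .
    have prc: "p \<in> rel_interior c"
    proof -
      have "q - lam *\<^sub>R (q - a) \<in> rel_interior c"
        by (rule rel_interior_closure_convex_shrink[OF cc a]) (use qc closure_subset lam0 lam1 in auto)
      moreover have "q - lam *\<^sub>R (q - a) = p" using pq by (simp add: algebra_simps)
      ultimately show ?thesis by simp
    qed
    have c2c: "c2 = c" using uniq_cell[OF g c2F cF c2(2) prc] .
    define C2' where "C2' = {d\<in>C2. d \<subseteq> c} - {c}"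
    have bC2: "b ` {d\<in>C2. d \<subseteq> c2} = insert a (b ` C2')" using c2 c2c a_def C2'_def by auto
    have qa: "q \<noteq> a" using qnr a by blast
    have "q \<in> convex hull (b ` C2')"
    proof (cases "C2' = {}")
      case True
      then have "p = a" using c2(3) bC2 by simp
      then have "(1 - lam) *\<^sub>R (q - a) = 0" using pq by (simp add: algebra_simps)
      then show ?thesis using lam1 qa by simp
    next
      case False2: False
      have ch2': "is_chain F C2'" using is_chain_subset[OF less.prems(2), of C2'] False2 C2'_def by auto
      obtain c2' where c2': "c2' \<in> C2'" "\<And>d. d \<in> C2' \<Longrightarrow> d \<subseteq> c2'" using is_chain_max[OF ch2'] by blast
      have c2'F: "c2' \<in> F" using c2' C2F C2'_def by auto
      have c2'c: "c2' \<subseteq> c" "c2' \<noteq> c" using c2' C2'_def by auto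
      have ne: "b ` C2' \<noteq> {}" using False2 by simp
      obtain s t q2 where st: "s \<ge> 0" "t \<ge> 0" "s + t = 1" "q2 \<in> convex hull (b ` C2')"
        "p = s *\<^sub>R a + t *\<^sub>R q2"
        using c2(3) unfolding bC2 convex_hull_insert[OF ne] by blast
      have hS2: "convex hull (b ` C2') \<subseteq> c2'" using chain_hull_sub[OF g val ch2' c2'F c2'(2)] by simp
      have q2c': "q2 \<in> c2'" using st(4) hS2 by blast
      have q2c: "q2 \<in> c" using q2c' c2'c by blast
      have q2nr: "q2 \<notin> rel_interior c" using key[OF c2'F c2'c q2c'] .
      define mu where "mu = 1 - lam"
      have mu0: "mu > 0" using lam1 mu_def by simp
      have e1: "p - a = mu *\<^sub>R (q - a)" unfolding mu_def by (subst pq) (simp add: algebra_simps)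
      have e2: "p - a = t *\<^sub>R (q2 - a)"
      proof -
        have s: "s = 1 - t" using st by simp
        show ?thesis unfolding st(5) s by (simp add: algebra_simps)
      qed
      have eq: "mu *\<^sub>R (q - a) = t *\<^sub>R (q2 - a)" using e1 e2 by simp
      have t0: "t > 0"
      proof (rule ccontr)
        assume "\<not> t > 0"
        then have "t = 0" using st by simp
        then have "mu *\<^sub>R (q - a) = 0" using eq by simp
        then show False using mu0 qa by simp
      qed
      have "mu = t"
      proof (rule ccontr)
        assume ne: "mu \<noteq> t"
        show False
        proof (cases "mu < t")
          case True
          have "q2 - a = (mu / t) *\<^sub>R (q - a)"
          proof -
            have "(1/t) *\<^sub>R (mu *\<^sub>R (q - a)) = (1/t) *\<^sub>R (t *\<^sub>R (q2 - a))" using eq by simp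
            then show ?thesis using t0 by (simp add: divide_simps)
          qed
          then have "q - (1 - mu / t) *\<^sub>R (q - a) = q2" by (simp add: algebra_simps)
          moreover have "q - (1 - mu / t) *\<^sub>R (q - a) \<in> rel_interior c"
            by (rule rel_interior_closure_convex_shrink[OF cc a])
               (use qc closure_subset True mu0 t0 in \<open>auto simp: divide_simps\<close>)
          ultimately show False using q2nr by simp
        next
          case False
          then have tm: "t < mu" using ne by simp
          have "q - a = (t / mu) *\<^sub>R (q2 - a)"
          proof -
            have "(1/mu) *\<^sub>R (mu *\<^sub>R (q - a)) = (1/mu) *\<^sub>R (t *\<^sub>R (q2 - a))" using eq by simp
            then show ?thesis using mu0 by (simp add: divide_simps)
          qed
          then have "q2 - (1 - t / mu) *\<^sub>R (q2 - a) = q" by (simp add: algebra_simps)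
          moreover have "q2 - (1 - t / mu) *\<^sub>R (q2 - a) \<in> rel_interior c"
            by (rule rel_interior_closure_convex_shrink[OF cc a])
               (use q2c closure_subset tm mu0 t0 in \<open>auto simp: divide_simps\<close>)
          ultimately show False using qnr by simp
        qed
      qed
      then have "q = q2" using eq mu0 by simp
      then show ?thesis using st(4) by simp
    qed
    moreover have "convex hull (b ` C2') \<subseteq> convex hull (b ` C2)"
      by (intro hull_mono image_mono) (auto simp: C2'_def)
    ultimately have qC2: "q \<in> convex hull (b ` C2)" by blast
    have "C' \<subseteq> C2" using less.hyps[OF card'[OF refl] ch' less.prems(2) _ qC2] qri S'_def by simp
    then show ?thesis using c2 c2c C'_def by auto
  qed
qed

lemma KG3:
  fixes F :: "mat4 set set"
  assumes g: "good F" and val: "\<forall>c\<in>F. b c \<in> rel_interior c"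
    and R: "R1 \<in> bary_sd b F" "R2 \<in> bary_sd b F" "x \<in> rel_interior R1" "x \<in> R2"
  shows "R1 \<subseteq> R2"
proof -
  obtain C1 where C1: "is_chain F C1" "R1 = convex hull (b ` C1)" using R(1) by (auto simp: bary_sd_def)
  obtain C2 where C2: "is_chain F C2" "R2 = convex hull (b ` C2)" using R(2) by (auto simp: bary_sd_def)
  have "C1 \<subseteq> C2" using G3c[OF g val C1(1) C2(1)] R C1 C2 by simp
  then show ?thesis using C1 C2 by (simp add: hull_mono image_mono)
qed

lemma Kuniq:
  fixes F :: "mat4 set set"
  assumes g: "good F" and val: "\<forall>c\<in>F. b c \<in> rel_interior c"
    and R: "R1 \<in> bary_sd b F" "R2 \<in> bary_sd b F" "x \<in> rel_interior R1" "x \<in> rel_interior R2"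
  shows "R1 = R2"
proof -
  have x1: "x \<in> R1" and x2: "x \<in> R2" using R(3,4) rel_interior_subset by blast+
  show ?thesis using KG3[OF g val R(1,2,3) x2] KG3[OF g val R(2,1,4) x1] by (rule subset_antisym)
qed

lemma memN:
  "x \<in> sd_nbhd X K \<longleftrightarrow> (\<exists>v\<in>sub_vertices X K. \<exists>S\<in>K. v extreme_point_of S \<and> x \<in> S)"
  unfolding sd_nbhd_def cstar_def by blast

lemma sub_vertices_mono: "X \<subseteq> Y \<Longrightarrow> sub_vertices X K \<subseteq> sub_vertices Y K"
  unfolding sub_vertices_def by blast

lemma sd_nbhd_mono: "X \<subseteq> Y \<Longrightarrow> sd_nbhd X K \<subseteq> sd_nbhd Y K"
  unfolding sd_nbhd_def using sub_vertices_mono by blast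

lemma main_sub:
  assumes v1: "valid_bary b1 WR_cells" and v2: "valid_bary b2 (bary_sd b1 V1_cells)"
    and a1: "\<alpha>1 \<in> WR_cells" and a2: "\<alpha>2 \<in> WR_cells"
  shows "N_alpha b1 b2 \<alpha>1 \<inter> N_alpha b1 b2 \<alpha>2 \<subseteq> N_alpha b1 b2 (\<alpha>1 \<inter> \<alpha>2)"
proof
  define F where "F = V1_cells"
  define K where "K = bary_sd b1 F"
  define K2 where "K2 = bary_sd b2 K"
  have FW: "F \<subseteq> WR_cells" by (auto simp: F_def V1_cells_def)
  have gF: "good F" using good_mono[OF good_WR FW] .
  have valF: "\<forall>c\<in>F. b1 c \<in> rel_interior c" using v1 FW by (auto simp: valid_bary_def)
  have valK: "\<forall>c\<in>K. b2 c \<in> rel_interior c" using v2 by (simp add: valid_bary_def K_def F_def)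
  have convK: "\<forall>c\<in>K. convex c" by (auto simp: K_def bary_sd_def)
  have NX: "N_alpha b1 b2 X = sd_nbhd X K2" for X by (simp add: N_alpha_def K2_def K_def F_def)
  have Kuniq': "R1 = R2" if hyp: "R1 \<in> K" "R2 \<in> K" "y \<in> rel_interior R1" "y \<in> rel_interior R2" for R1 R2 y
    using Kuniq[OF gF valF] hyp by (auto simp: K_def)
  have tau_sub: "\<tau> \<subseteq> \<alpha>" if hyp: "\<tau> \<in> K" "b2 \<tau> \<in> \<alpha>" "\<alpha> \<in> WR_cells" for \<tau> \<alpha>
  proof -
    obtain E where E: "is_chain F E" "\<tau> = convex hull (b1 ` E)" using hyp(1) unfolding K_def bary_sd_def by blast
    obtain e where e: "e \<in> E" "\<And>d. d \<in> E \<Longrightarrow> d \<subseteq> e" using is_chain_max[OF E(1)] by blast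
    have eF: "e \<in> F" using E(1) e by (auto simp: is_chain_def)
    have "\<tau> \<subseteq> e" using chain_hull_sub[OF gF valF E(1) eF e(2)] E(2) by simp
    moreover have "b2 \<tau> \<in> rel_interior \<tau>" using valK hyp(1) by blast
    ultimately show ?thesis using subset_cell[OF good_WR _ hyp(3), of e \<tau> "b2 \<tau>"] eF FW hyp(2) by blast
  qed
  have elem_sub: "e \<subseteq> \<alpha>" if hyp: "is_chain F E" "e \<in> E" "convex hull (b1 ` E) \<subseteq> \<alpha>" "\<alpha> \<in> WR_cells" for E e \<alpha>
  proof -
    have eF: "e \<in> F" using hyp by (auto simp: is_chain_def)
    have r: "b1 e \<in> rel_interior e" using valF eF by blast
    have "b1 e \<in> \<alpha>" using hyp(2,3) hull_subset[of "b1 ` E" convex] by blast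
    then show ?thesis using subset_cell[OF good_WR _ hyp(4) order_refl r] eF FW by blast
  qed
  have helper: "y \<in> sd_nbhd X K2" if hyp: "is_chain K D" "y \<in> convex hull (b2 ` D)" "\<tau> \<in> D"
      "b2 \<tau> extreme_point_of convex hull (b2 ` D)" "\<tau> \<subseteq> X" for D y \<tau> X
  proof -
    have tK: "\<tau> \<in> K" using hyp by (auto simp: is_chain_def)
    have "b2 \<tau> \<in> \<tau>" using valK tK rel_interior_subset by blast
    then have sX: "{b2 \<tau>} \<subseteq> X" using hyp(5) by blast
    have "is_chain K {\<tau>}" using tK by (simp add: is_chain_def)
    then have "convex hull (b2 ` {\<tau>}) \<in> K2" unfolding K2_def bary_sd_def by blast
    then have "{b2 \<tau>} \<in> K2" by simp
    then have "b2 \<tau> \<in> sub_vertices X K2" using sX unfolding sub_vertices_def by force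
    moreover have "convex hull (b2 ` D) \<in> K2" using hyp(1) unfolding K2_def bary_sd_def by blast
    ultimately show ?thesis unfolding memN using hyp(2,4) by blast
  qed
  have getD: "\<exists>D \<tau> \<rho>. is_chain K D \<and> y \<in> convex hull (b2 ` D) \<and> \<tau> \<in> D \<and>
      b2 \<tau> extreme_point_of convex hull (b2 ` D) \<and> \<tau> \<subseteq> \<alpha> \<and> \<rho> \<in> D \<and> y \<in> rel_interior \<rho> \<and>
      y \<in> convex hull (b2 ` {d\<in>D. d \<subseteq> \<rho>})"
    if hyp: "y \<in> sd_nbhd \<alpha> K2" "\<alpha> \<in> WR_cells" for y \<alpha>
  proof -
    obtain v S where vS: "v \<in> sub_vertices \<alpha> K2" "S \<in> K2" "v extreme_point_of S" "y \<in> S"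
      using hyp(1) unfolding memN by blast
    have va: "v \<in> \<alpha>" using vS(1) unfolding sub_vertices_def extreme_point_of_def by blast
    obtain D where D: "is_chain K D" "S = convex hull (b2 ` D)" using vS(2) unfolding K2_def bary_sd_def by blast
    have "v \<in> b2 ` D" using vS(3) D(2) extreme_point_of_convex_hull by blast
    then obtain \<tau> where t: "\<tau> \<in> D" "v = b2 \<tau>" by blast
    have tK: "\<tau> \<in> K" using D(1) t by (auto simp: is_chain_def)
    have ta: "\<tau> \<subseteq> \<alpha>" using tau_sub[OF tK _ hyp(2)] va t by simp
    obtain \<rho> where r: "\<rho> \<in> D" "y \<in> rel_interior \<rho>" "y \<in> convex hull (b2 ` {d\<in>D. d \<subseteq> \<rho>})"
      using L1[OF convK valK D(1), of y] vS(4) D(2) by blast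
    show ?thesis using D t ta r vS by blast
  qed
  fix x assume x: "x \<in> N_alpha b1 b2 \<alpha>1 \<inter> N_alpha b1 b2 \<alpha>2"
  obtain D1 \<tau>1 \<rho>1 where d1: "is_chain K D1" "x \<in> convex hull (b2 ` D1)" "\<tau>1 \<in> D1"
      "b2 \<tau>1 extreme_point_of convex hull (b2 ` D1)" "\<tau>1 \<subseteq> \<alpha>1" "\<rho>1 \<in> D1" "x \<in> rel_interior \<rho>1"
      "x \<in> convex hull (b2 ` {d\<in>D1. d \<subseteq> \<rho>1})"
    using getD[OF _ a1, of x] x NX by blast
  obtain D2 \<tau>2 \<rho>2 where d2: "is_chain K D2" "x \<in> convex hull (b2 ` D2)" "\<tau>2 \<in> D2"
      "b2 \<tau>2 extreme_point_of convex hull (b2 ` D2)" "\<tau>2 \<subseteq> \<alpha>2" "\<rho>2 \<in> D2" "x \<in> rel_interior \<rho>2"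
      "x \<in> convex hull (b2 ` {d\<in>D2. d \<subseteq> \<rho>2})"
    using getD[OF _ a2, of x] x NX by blast
  have D1K: "D1 \<subseteq> K" and D2K: "D2 \<subseteq> K" using d1(1) d2(1) by (auto simp: is_chain_def)
  have rr: "\<rho>1 = \<rho>2" using Kuniq'[of \<rho>1 \<rho>2 x] d1(6,7) d2(6,7) D1K D2K by blast
  have cmp1: "\<tau>1 \<subseteq> \<rho>1 \<or> \<rho>1 \<subseteq> \<tau>1" using d1(1,3,6) by (auto simp: is_chain_def)
  have cmp2: "\<tau>2 \<subseteq> \<rho>1 \<or> \<rho>1 \<subseteq> \<tau>2" using d2(1,3,6) rr by (auto simp: is_chain_def)
  show "x \<in> N_alpha b1 b2 (\<alpha>1 \<inter> \<alpha>2)"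
    unfolding NX
  proof (cases "\<rho>1 \<subseteq> \<tau>1 \<and> \<rho>1 \<subseteq> \<tau>2")
    case True
    then have ra: "\<rho>1 \<subseteq> \<alpha>1 \<inter> \<alpha>2" using d1(5) d2(5) by blast
    define D where "D = {d\<in>D1. d \<subseteq> \<rho>1}"
    have rD: "\<rho>1 \<in> D" using d1(6) D_def by simp
    have chD: "is_chain K D" using is_chain_subset[OF d1(1), of D] rD D_def by auto
    have finD: "finite D" using chD by (simp add: is_chain_def)
    have rK: "\<rho>1 \<in> K" using D1K d1(6) by blast
    have brr: "b2 \<rho>1 \<in> rel_interior \<rho>1" using valK rK by blast
    have notin: "b2 \<rho>1 \<notin> convex hull (b2 ` (D - {\<rho>1}))"
    proof
      assume a: "b2 \<rho>1 \<in> convex hull (b2 ` (D - {\<rho>1}))"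
      then have ne: "D - {\<rho>1} \<noteq> {}" by (metis convex_hull_empty empty_iff image_empty)
      have ch: "is_chain K (D - {\<rho>1})" using is_chain_subset[OF chD _ ne] by blast
      obtain \<sigma> where s: "\<sigma> \<in> D - {\<rho>1}" "b2 \<rho>1 \<in> rel_interior \<sigma>"
        using L1[OF convK valK ch a] by blast
      have "\<sigma> \<in> K" using s chD by (auto simp: is_chain_def)
      then have "\<sigma> = \<rho>1" using Kuniq'[OF _ rK s(2) brr] by simp
      then show False using s by simp
    qed
    have "b2 ` D = insert (b2 \<rho>1) (b2 ` (D - {\<rho>1}))" using rD by blast
    then have ext: "b2 \<rho>1 extreme_point_of convex hull (b2 ` D)"
      using extreme_point_of_convex_hull_insert[OF _ notin] finD by simp
    show "x \<in> sd_nbhd (\<alpha>1 \<inter> \<alpha>2) K2" using helper[OF chD _ rD ext ra] d1(8) D_def by simp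
  next
    case False
    have "\<tau>1 \<subseteq> \<alpha>2 \<or> \<tau>2 \<subseteq> \<alpha>1"
    proof (cases "\<tau>1 \<subseteq> \<rho>1 \<and> \<tau>2 \<subseteq> \<rho>1")
      case True
      have rK: "\<rho>1 \<in> K" using D1K d1(6) by blast
      obtain P where P: "is_chain F P" "\<rho>1 = convex hull (b1 ` P)" using rK unfolding K_def bary_sd_def by blast
      have t1K: "\<tau>1 \<in> K" using D1K d1(3) by blast
      obtain E1 where E1: "is_chain F E1" "\<tau>1 = convex hull (b1 ` E1)" using t1K unfolding K_def bary_sd_def by blast
      have t2K: "\<tau>2 \<in> K" using D2K d2(3) by blast
      obtain E2 where E2: "is_chain F E2" "\<tau>2 = convex hull (b1 ` E2)" using t2K unfolding K_def bary_sd_def by blast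
      have E1P: "E1 \<subseteq> P" using claimA[OF gF valF E1(1) P(1)] True E1(2) P(2) by simp
      have E2P: "E2 \<subseteq> P" using claimA[OF gF valF E2(1) P(1)] True E2(2) P(2) by simp
      have hull_in: "convex hull (b1 ` E) \<subseteq> \<alpha>" if hyp: "is_chain F E" "\<forall>e\<in>E. e \<subseteq> \<alpha>" "\<alpha> \<in> WR_cells" for E \<alpha>
      proof (rule hull_minimal)
        show "convex \<alpha>" using cell_convex hyp(3) .
        show "b1 ` E \<subseteq> \<alpha>"
        proof
          fix y assume "y \<in> b1 ` E"
          then obtain e where e: "e \<in> E" "y = b1 e" by blast
          have "e \<in> F" using hyp(1) e by (auto simp: is_chain_def)
          then have "b1 e \<in> e" using valF rel_interior_subset by blast
          then show "y \<in> \<alpha>" using e hyp(2) by blast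
        qed
      qed
      show ?thesis
      proof (rule ccontr)
        assume "\<not> (\<tau>1 \<subseteq> \<alpha>2 \<or> \<tau>2 \<subseteq> \<alpha>1)"
        then have n: "\<not> \<tau>1 \<subseteq> \<alpha>2" "\<not> \<tau>2 \<subseteq> \<alpha>1" by auto
        obtain e1 where e1: "e1 \<in> E1" "\<not> e1 \<subseteq> \<alpha>2" using hull_in[OF E1(1) _ a2] n(1) E1(2) by blast
        obtain e2 where e2: "e2 \<in> E2" "\<not> e2 \<subseteq> \<alpha>1" using hull_in[OF E2(1) _ a1] n(2) E2(2) by blast
        have e1a: "e1 \<subseteq> \<alpha>1" using elem_sub[OF E1(1) e1(1) _ a1] d1(5) E1(2) by simp
        have e2a: "e2 \<subseteq> \<alpha>2" using elem_sub[OF E2(1) e2(1) _ a2] d2(5) E2(2) by simp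
        have "e1 \<in> P" "e2 \<in> P" using E1P E2P e1(1) e2(1) by blast+
        then have "e1 \<subseteq> e2 \<or> e2 \<subseteq> e1" using P(1) unfolding is_chain_def by blast
        then show False using e1 e2 e1a e2a by blast
      qed
    next
      case False2: False
      have "(\<rho>1 \<subseteq> \<tau>1 \<and> \<tau>2 \<subseteq> \<rho>1) \<or> (\<tau>1 \<subseteq> \<rho>1 \<and> \<rho>1 \<subseteq> \<tau>2)" using False False2 cmp1 cmp2 by blast
      then show ?thesis using d1(5) d2(5) by blast
    qed
    then show "x \<in> sd_nbhd (\<alpha>1 \<inter> \<alpha>2) K2"
    proof
      assume "\<tau>1 \<subseteq> \<alpha>2"
      then have "\<tau>1 \<subseteq> \<alpha>1 \<inter> \<alpha>2" using d1(5) by blast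
      then show "x \<in> sd_nbhd (\<alpha>1 \<inter> \<alpha>2) K2" using helper[OF d1(1) d1(2) d1(3) d1(4)] by blast
    next
      assume "\<tau>2 \<subseteq> \<alpha>1"
      then have "\<tau>2 \<subseteq> \<alpha>1 \<inter> \<alpha>2" using d2(5) by blast
      then show "x \<in> sd_nbhd (\<alpha>1 \<inter> \<alpha>2) K2" using helper[OF d2(1) d2(2) d2(3) d2(4)] by blast
    qed
  qed
qed

theorem lemma3p5:
  fixes b1 b2 :: "mat4 set \<Rightarrow> mat4" and \<alpha>1 \<alpha>2 :: "mat4 set"
  assumes "valid_bary b1 WR_cells"
    and "valid_bary b2 (bary_sd b1 V1_cells)"
    and "\<alpha>1 \<in> V1_cells" and "\<alpha>2 \<in> V1_cells" and "\<alpha>1 \<noteq> \<alpha>2"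
    and "\<alpha>1 \<inter> \<alpha>2 \<in> V1_cells"
  shows "N_alpha_int b1 b2 \<alpha>1 \<inter> N_alpha_int b1 b2 \<alpha>2 = N_alpha_int b1 b2 (\<alpha>1 \<inter> \<alpha>2)"
proof -
  have a1: "\<alpha>1 \<in> WR_cells" and a2: "\<alpha>2 \<in> WR_cells" using assms(3,4) by (auto simp: V1_cells_def)
  have "N_alpha b1 b2 (\<alpha>1 \<inter> \<alpha>2) \<subseteq> N_alpha b1 b2 \<alpha>1" "N_alpha b1 b2 (\<alpha>1 \<inter> \<alpha>2) \<subseteq> N_alpha b1 b2 \<alpha>2"
    unfolding N_alpha_def by (intro sd_nbhd_mono; blast)+
  then have eq: "N_alpha b1 b2 \<alpha>1 \<inter> N_alpha b1 b2 \<alpha>2 = N_alpha b1 b2 (\<alpha>1 \<inter> \<alpha>2)"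
    using main_sub[OF assms(1,2) a1 a2] by blast
  show ?thesis unfolding N_alpha_int_def interior_of_Int[symmetric] eq ..
qed

end
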